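(* Let $r\ge 1$ be an integer and let $G$ be an $r$-regular finite simple graph of order $n$. Then $$\gamma^{0}_{st}(G)=n-2\,\gamma_{\times\lceil r/2\rceil,t}(G).$$
   Context: For a vertex $v$ of a graph $G=(V,E)$, $N(v)$ is its open neighborhood, and for $f:V\to\mathbb{R}$ and $B\subseteq V$ write $f(B)=\sum_{v\in B}f(v)$; $f(V)$ is the weight of $f$. An inverse signed total dominating function (ISTDF) of $G$ is a function $f:V\to\{-1,1\}$ such that $f(N(v))\le 0$ for every $v\in V$; $\gamma^{0}_{st}(G)$ is the maximum weight of an ISTDF of $G$. For an integer $1\le k\le \delta(G)$, a $k$-tuple total dominating set of $G$ is a set $D\subseteq V$ with $|N(v)\cap D|\ge k$ for all $v\in V$; $\gamma_{\times k,t}(G)$ is the minimum cardinality of a $k$-tuple total dominating set. *)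

theory Defs
  imports Complex_Main
begin

definition simple_graph :: "'a set \<Rightarrow> ('a \<Rightarrow> 'a \<Rightarrow> bool) \<Rightarrow> bool" where
  "simple_graph V E \<longleftrightarrow> finite V \<and> (\<forall>u v. E u v \<longrightarrow> u \<in> V \<and> v \<in> V)
     \<and> (\<forall>u v. E u v \<longrightarrow> E v u) \<and> (\<forall>v. \<not> E v v)"

definition nbhd :: "'a set \<Rightarrow> ('a \<Rightarrow> 'a \<Rightarrow> bool) \<Rightarrow> 'a \<Rightarrow> 'a set" where
  "nbhd V E v = {u \<in> V. E v u}"

definition regular :: "'a set \<Rightarrow> ('a \<Rightarrow> 'a \<Rightarrow> bool) \<Rightarrow> nat \<Rightarrow> bool" where
  "regular V E r \<longleftrightarrow> (\<forall>v\<in>V. card (nbhd V E v) = r)"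

definition istdf :: "'a set \<Rightarrow> ('a \<Rightarrow> 'a \<Rightarrow> bool) \<Rightarrow> ('a \<Rightarrow> int) \<Rightarrow> bool" where
  "istdf V E f \<longleftrightarrow> (\<forall>v\<in>V. f v \<in> {-1, 1}) \<and> (\<forall>v\<in>V. sum f (nbhd V E v) \<le> 0)"

definition inv_signed_total_dom :: "'a set \<Rightarrow> ('a \<Rightarrow> 'a \<Rightarrow> bool) \<Rightarrow> int" where
  "inv_signed_total_dom V E = Max {sum f V | f. istdf V E f}"

definition k_tuple_total_dom_set :: "'a set \<Rightarrow> ('a \<Rightarrow> 'a \<Rightarrow> bool) \<Rightarrow> nat \<Rightarrow> 'a set \<Rightarrow> bool" where
  "k_tuple_total_dom_set V E k D \<longleftrightarrow> D \<subseteq> V \<and> (\<forall>v\<in>V. card (nbhd V E v \<inter> D) \<ge> k)"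

definition k_tuple_total_dom :: "'a set \<Rightarrow> ('a \<Rightarrow> 'a \<Rightarrow> bool) \<Rightarrow> nat \<Rightarrow> nat" where
  "k_tuple_total_dom V E k = Min {card D | D. k_tuple_total_dom_set V E k D}"

end

theory Submission
  imports Defs
begin

lemma sum_pm:
  assumes "finite A"
  shows "sum (\<lambda>v. if v \<in> D then -1 else (1::int)) A = int (card A) - 2 * int (card (A \<inter> D))"
  using assms
proof (induction A rule: finite_induct)
  case empty then show ?case by simp
next
  case (insert x F)
  have "insert x F \<inter> D = (if x \<in> D then insert x (F \<inter> D) else F \<inter> D)" by auto
  moreover have "finite (F \<inter> D)" using insert by simp
  moreover have "x \<notin> F \<inter> D" using insert by simp
  ultimately show ?case using insert by (auto simp: card_insert_if)
qed

lemma ceil_half: "nat \<lceil>real r / 2\<rceil> = (r + 1) div 2"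
proof -
  have "\<lceil>real r / 2\<rceil> = int ((r + 1) div 2)"
  proof (rule ceiling_unique)
    show "real_of_int (int ((r + 1) div 2)) - 1 < real r / 2"
      by (cases "even r") (auto elim!: evenE oddE simp: field_simps)
    show "real r / 2 \<le> real_of_int (int ((r + 1) div 2))"
      by (cases "even r") (auto elim!: evenE oddE simp: field_simps)
  qed
  then show ?thesis by simp
qed

lemma cond_equiv: "(int r - 2 * int c \<le> 0) \<longleftrightarrow> c \<ge> nat \<lceil>real r / 2\<rceil>"
  unfolding ceil_half by auto

theorem mainTheorem5:
  fixes V :: "'a set" and E :: "'a \<Rightarrow> 'a \<Rightarrow> bool" and r n :: nat
  assumes "simple_graph V E" and "regular V E r" and "r \<ge> 1" and "card V = n"
  shows "inv_signed_total_dom V E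
           = int n - 2 * int (k_tuple_total_dom V E (nat \<lceil>real r / 2\<rceil>))"
proof -
  define k where "k = nat \<lceil>real r / 2\<rceil>"
  have fin: "finite V" using assms(1) by (simp add: simple_graph_def)
  have nfin: "\<And>v. finite (nbhd V E v)" using fin by (simp add: nbhd_def)
  have nsub: "\<And>v. nbhd V E v \<subseteq> V" by (auto simp: nbhd_def)
  define fD :: "'a set \<Rightarrow> 'a \<Rightarrow> int" where "fD = (\<lambda>D v. if v \<in> D then -1 else (1::int))"
  have key: "istdf V E (fD D) \<longleftrightarrow> k_tuple_total_dom_set V E k D" if "D \<subseteq> V" for D
  proof -
    have "\<And>v. v \<in> V \<Longrightarrow> sum (fD D) (nbhd V E v) = int r - 2 * int (card (nbhd V E v \<inter> D))"
      using sum_pm[OF nfin] assms(2) by (simp add: fD_def regular_def)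
    then show ?thesis using that cond_equiv[of r] unfolding istdf_def k_tuple_total_dom_set_def fD_def k_def
      by auto
  qed
  have wt: "sum (fD D) V = int n - 2 * int (card D)" if "D \<subseteq> V" for D
    using sum_pm[OF fin, of D] that assms(4) by (simp add: fD_def Int_absorb1)
  define S where "S = {sum f V | f. istdf V E f}"
  define T where "T = {card D | D. k_tuple_total_dom_set V E k D}"
  have conv: "\<exists>D. D \<subseteq> V \<and> (\<forall>v\<in>V. f v = fD D v)" if "istdf V E f" for f
  proof -
    have "\<forall>v\<in>V. f v = fD {v\<in>V. f v = -1} v"
      using that by (auto simp: istdf_def fD_def)
    then show ?thesis by (intro exI[of _ "{v\<in>V. f v = -1}"]) auto
  qed
  have agree: "sum f A = sum (fD D) A" if "\<forall>v\<in>V. f v = fD D v" "A \<subseteq> V" for f D A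
    using that by (intro sum.cong) auto
  have agree_istdf: "istdf V E f \<longleftrightarrow> istdf V E (fD D)" if "\<forall>v\<in>V. f v = fD D v" for f D
    unfolding istdf_def using that agree[OF that nsub] by auto
  have Sform: "S = (\<lambda>c. int n - 2 * int c) ` T"
  proof
    show "S \<subseteq> (\<lambda>c. int n - 2 * int c) ` T"
    proof
      fix x assume "x \<in> S"
      then obtain f where f: "istdf V E f" "x = sum f V" by (auto simp: S_def)
      then obtain D where D: "D \<subseteq> V" "\<forall>v\<in>V. f v = fD D v" using conv by blast
      have "k_tuple_total_dom_set V E k D" using key[OF D(1)] agree_istdf[OF D(2)] f by simp
      moreover have "x = int n - 2 * int (card D)" using f agree[OF D(2), of V] wt[OF D(1)] by simp
      ultimately show "x \<in> (\<lambda>c. int n - 2 * int c) ` T" by (auto simp: T_def)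
    qed
    show "(\<lambda>c. int n - 2 * int c) ` T \<subseteq> S"
    proof
      fix x assume "x \<in> (\<lambda>c. int n - 2 * int c) ` T"
      then obtain D where D: "k_tuple_total_dom_set V E k D" "x = int n - 2 * int (card D)"
        by (auto simp: T_def)
      have DV: "D \<subseteq> V" using D(1) by (simp add: k_tuple_total_dom_set_def)
      have "istdf V E (fD D)" using key[OF DV] D by simp
      then show "x \<in> S" using D wt[OF DV] unfolding S_def by (metis (mono_tags, lifting) mem_Collect_eq)
    qed
  qed
  have Tfin: "finite T"
  proof -
    have "T \<subseteq> card ` Pow V" by (auto simp: T_def k_tuple_total_dom_set_def)
    then show ?thesis using fin finite_subset by blast
  qed
  have Tne: "T \<noteq> {}"
  proof -
    have "k_tuple_total_dom_set V E k V"
      using assms(2) cond_equiv[of r "r"] unfolding k_tuple_total_dom_set_def regular_def k_def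
      by (auto simp: Int_absorb2[OF nsub])
    then show ?thesis by (auto simp: T_def)
  qed
  have mT: "Min T \<in> T" using Min_in[OF Tfin Tne] .
  have Sfin: "finite S" unfolding Sform using Tfin by simp
  have "Max S = int n - 2 * int (Min T)"
  proof (rule Max_eqI[OF Sfin])
    fix y assume "y \<in> S"
    then obtain c where "c \<in> T" "y = int n - 2 * int c" unfolding Sform by auto
    moreover have "Min T \<le> c" using Min_le[OF Tfin \<open>c \<in> T\<close>] .
    ultimately show "y \<le> int n - 2 * int (Min T)" by simp
  next
    show "int n - 2 * int (Min T) \<in> S" unfolding Sform using mT by simp
  qed
  then show ?thesis unfolding inv_signed_total_dom_def k_tuple_total_dom_def S_def T_def k_def .
qed

end
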